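(* Let $E$ be an elliptic curve defined over a field $K$ with $\operatorname{char}K\neq 2$, and let $P\in E(K)$. Then at least one of the following holds: (i) $\delta_2^P$ is irreducible over $K$; (ii) $P$ is a $2$-torsion point; (iii) there exists $Q\in E(K)$ with $2Q=P$; (iv) there exist an elliptic curve $E'/K$, an isogeny $\psi:E'\to E$ of degree $2$ defined over $K$, and a point $Q\in E'(K)$ with $\psi(Q)=P$.
   Context: For $E$ with Weierstrass coordinate functions $x,y$ and $m\in\mathbb{Z}$, $\psi_m$ is the $m$-th division polynomial ($\psi_m^2\in K[x]$), $\theta_m=x\psi_m^2-\psi_{m+1}\psi_{m-1}$, so $x([m]R)=\theta_m(x(R))/\psi_m^2(x(R))$; and $\delta_m^P=\theta_m-x(P)\psi_m^2$ if $P\ne O$, $\delta_m^P=\psi_m^2$ if $P=O$. *)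

theory Defs
  imports "HOL-Computational_Algebra.Polynomial"
          "HOL-Computational_Algebra.Factorial_Ring"
          "HOL-Computational_Algebra.Fraction_Field"
begin

record 'a wcurve =
  wa1 :: 'a
  wa2 :: 'a
  wa3 :: 'a
  wa4 :: 'a
  wa6 :: 'a

definition wb2 :: "'a::comm_ring_1 wcurve \<Rightarrow> 'a" where
  "wb2 E = wa1 E ^ 2 + 4 * wa2 E"
definition wb4 :: "'a::comm_ring_1 wcurve \<Rightarrow> 'a" where
  "wb4 E = 2 * wa4 E + wa1 E * wa3 E"
definition wb6 :: "'a::comm_ring_1 wcurve \<Rightarrow> 'a" where
  "wb6 E = wa3 E ^ 2 + 4 * wa6 E"
definition wb8 :: "'a::comm_ring_1 wcurve \<Rightarrow> 'a" where
  "wb8 E = wa1 E ^ 2 * wa6 E + 4 * wa2 E * wa6 E - wa1 E * wa3 E * wa4 E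
           + wa2 E * wa3 E ^ 2 - wa4 E ^ 2"

definition disc :: "'a::comm_ring_1 wcurve \<Rightarrow> 'a" where
  "disc E = - (wb2 E ^ 2 * wb8 E) - 8 * wb4 E ^ 3 - 27 * wb6 E ^ 2
            + 9 * wb2 E * wb4 E * wb6 E"

definition elliptic :: "'a::field wcurve \<Rightarrow> bool" where
  "elliptic E \<longleftrightarrow> disc E \<noteq> 0"

definition weq :: "('a \<Rightarrow> 'b::comm_ring_1) \<Rightarrow> 'a wcurve \<Rightarrow> 'b \<Rightarrow> 'b \<Rightarrow> 'b" where
  "weq c E X Y = Y ^ 2 + c (wa1 E) * X * Y + c (wa3 E) * Y
                 - (X ^ 3 + c (wa2 E) * X ^ 2 + c (wa4 E) * X + c (wa6 E))"

datatype 'a point = Infty | Pt 'a 'a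

fun on_curve :: "'a::field wcurve \<Rightarrow> 'a point \<Rightarrow> bool" where
  "on_curve E Infty = True"
| "on_curve E (Pt x y) = (weq id E x y = 0)"

text \<open>Addition law (Silverman, AEC, III.2.3).\<close>
fun add :: "'a::field wcurve \<Rightarrow> 'a point \<Rightarrow> 'a point \<Rightarrow> 'a point" where
  "add E Infty Q = Q"
| "add E P Infty = P"
| "add E (Pt x1 y1) (Pt x2 y2) =
     (if x1 = x2 \<and> y1 + y2 + wa1 E * x2 + wa3 E = 0 then Infty
      else
        (let l = (if x1 \<noteq> x2 then (y2 - y1) / (x2 - x1)
                  else (3 * x1 ^ 2 + 2 * wa2 E * x1 + wa4 E - wa1 E * y1)
                        / (2 * y1 + wa1 E * x1 + wa3 E));
             n = (if x1 \<noteq> x2 then (y1 * x2 - y2 * x1) / (x2 - x1)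
                  else (- (x1 ^ 3) + wa4 E * x1 + 2 * wa6 E - wa3 E * y1)
                        / (2 * y1 + wa1 E * x1 + wa3 E));
             x3 = l ^ 2 + wa1 E * l - wa2 E - x1 - x2;
             y3 = - (l + wa1 E) * x3 - n - wa3 E
         in Pt x3 y3))"

definition two_torsion :: "'a::field wcurve \<Rightarrow> 'a point \<Rightarrow> bool" where
  "two_torsion E P \<longleftrightarrow> add E P P = Infty"

text \<open>psi_1 = 1; psi_2^2 = 4x^3 + b2 x^2 + 2 b4 x + b6 (in K[x]);
  psi_3 = 3x^4 + b2 x^3 + 3 b4 x^2 + 3 b6 x + b8;
  theta_2 = x psi_2^2 - psi_3 psi_1.\<close>
definition psi2sq :: "'a::field wcurve \<Rightarrow> 'a poly" where
  "psi2sq E = [:wb6 E, 2 * wb4 E, wb2 E, 4:]"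
definition psi3 :: "'a::field wcurve \<Rightarrow> 'a poly" where
  "psi3 E = [:wb8 E, 3 * wb6 E, 3 * wb4 E, wb2 E, 3:]"
definition theta2 :: "'a::field wcurve \<Rightarrow> 'a poly" where
  "theta2 E = [:0, 1:] * psi2sq E - psi3 E * 1"

definition delta2 :: "'a::field wcurve \<Rightarrow> 'a point \<Rightarrow> 'a poly" where
  "delta2 E P = (case P of Infty \<Rightarrow> psi2sq E
                  | Pt xP yP \<Rightarrow> theta2 E - smult xP (psi2sq E))"

text \<open>An isogeny psi : E' -> E defined over K is represented by its coordinate functions,
  which are elements of the function field K(E') = K(x) + K(x) y:
    x o psi = u(x)/v(x),   y o psi = (g1(x)/g2(x)) y + h1(x)/h2(x),
  with each quotient in lowest terms.  The requirement that psi maps E' to E is that the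
  Weierstrass equation of E, evaluated at (x o psi, y o psi), vanishes in K(E') =
  K(x)[y]/(equation of E'), i.e. that the equation of E' (a polynomial in y over K(x))
  divides it.  psi(O) = O holds iff x o psi has a pole at O, i.e. deg v < deg u.
  The degree of psi is [K(E') : psi^* K(E)] = [K(x) : K(u/v)] = max(deg u, deg v) = deg u.\<close>

type_synonym 'a isog = "'a poly \<times> 'a poly \<times> 'a poly \<times> 'a poly \<times> 'a poly \<times> 'a poly"

definition iu :: "'a isog \<Rightarrow> 'a poly" where "iu \<phi> = fst \<phi>"
definition iv :: "'a isog \<Rightarrow> 'a poly" where "iv \<phi> = fst (snd \<phi>)"
definition ig1 :: "'a isog \<Rightarrow> 'a poly" where "ig1 \<phi> = fst (snd (snd \<phi>))"
definition ig2 :: "'a isog \<Rightarrow> 'a poly" where "ig2 \<phi> = fst (snd (snd (snd \<phi>)))"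
definition ih1 :: "'a isog \<Rightarrow> 'a poly" where "ih1 \<phi> = fst (snd (snd (snd (snd \<phi>))))"
definition ih2 :: "'a isog \<Rightarrow> 'a poly" where "ih2 \<phi> = snd (snd (snd (snd (snd \<phi>))))"

definition cK :: "'a::field \<Rightarrow> 'a poly fract poly" where
  "cK a = [: Fract [:a:] 1 :]"

definition is_isogeny :: "'a::field wcurve \<Rightarrow> 'a wcurve \<Rightarrow> 'a isog \<Rightarrow> bool" where
  "is_isogeny E' E \<phi> \<longleftrightarrow>
     iv \<phi> \<noteq> 0 \<and> ig2 \<phi> \<noteq> 0 \<and> ih2 \<phi> \<noteq> 0 \<and>
     coprime (iu \<phi>) (iv \<phi>) \<and> coprime (ig1 \<phi>) (ig2 \<phi>) \<and> coprime (ih1 \<phi>) (ih2 \<phi>) \<and>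
     degree (iv \<phi>) < degree (iu \<phi>) \<and>
     weq cK E' [: Fract [:0, 1:] 1 :] [:0, 1:]
       dvd weq cK E [: Fract (iu \<phi>) (iv \<phi>) :]
                    [: Fract (ih1 \<phi>) (ih2 \<phi>), Fract (ig1 \<phi>) (ig2 \<phi>) :]"

definition isog_degree :: "('a::field) isog \<Rightarrow> nat" where
  "isog_degree \<phi> = max (degree (iu \<phi>)) (degree (iv \<phi>))"

fun isog_apply :: "('a::field) isog \<Rightarrow> 'a point \<Rightarrow> 'a point" where
  "isog_apply \<phi> Infty = Infty"
| "isog_apply \<phi> (Pt x y) =
     (if poly (iv \<phi>) x = 0 then Infty
      else Pt (poly (iu \<phi>) x / poly (iv \<phi>) x)
              (poly (ig1 \<phi>) x / poly (ig2 \<phi>) x * y + poly (ih1 \<phi>) x / poly (ih2 \<phi>) x))"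

end

theory Submission
  imports Defs "HOL-Computational_Algebra.Polynomial_Factorial"
begin

definition B2 :: "'a::field wcurve \<Rightarrow> 'a" where "B2 E = wa1 E ^ 2 / 4 + wa2 E"
definition B4 :: "'a::field wcurve \<Rightarrow> 'a" where "B4 E = wa1 E * wa3 E / 2 + wa4 E"
definition B6 :: "'a::field wcurve \<Rightarrow> 'a" where "B6 E = wa3 E ^ 2 / 4 + wa6 E"
definition FF :: "'a::field wcurve \<Rightarrow> 'a \<Rightarrow> 'a" where
  "FF E x = x^3 + B2 E * x^2 + B4 E * x + B6 E"
definition dFF :: "'a::field wcurve \<Rightarrow> 'a \<Rightarrow> 'a" where
  "dFF E x = 3*x^2 + 2 * B2 E * x + B4 E"

lemma nz:
  assumes "(2::'a::field) \<noteq> 0"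
  shows "(4::'a) \<noteq> 0" "(8::'a) \<noteq> 0" "(16::'a) \<noteq> 0" "(32::'a) \<noteq> 0" "(64::'a) \<noteq> 0" "(128::'a) \<noteq> 0" "(256::'a) \<noteq> 0" "(512::'a) \<noteq> 0" "(1024::'a) \<noteq> 0" "(2048::'a) \<noteq> 0" "(4096::'a) \<noteq> 0" "(8192::'a) \<noteq> 0" "(16384::'a) \<noteq> 0" "(32768::'a) \<noteq> 0" "(65536::'a) \<noteq> 0" "(131072::'a) \<noteq> 0" "(262144::'a) \<noteq> 0" "(524288::'a) \<noteq> 0" "(1048576::'a) \<noteq> 0" "(2097152::'a) \<noteq> 0" "(4194304::'a) \<noteq> 0" "(8388608::'a) \<noteq> 0" "(16777216::'a) \<noteq> 0" "(33554432::'a) \<noteq> 0" "(67108864::'a) \<noteq> 0" "(134217728::'a) \<noteq> 0" "(268435456::'a) \<noteq> 0" "(536870912::'a) \<noteq> 0" "(1073741824::'a) \<noteq> 0"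
proof -
  have p: "\<And>k. (2::'a)^k \<noteq> 0" using assms by simp
  show "(4::'a) \<noteq> 0" using p[of 2] by simp
  show "(8::'a) \<noteq> 0" using p[of 3] by simp
  show "(16::'a) \<noteq> 0" using p[of 4] by simp
  show "(32::'a) \<noteq> 0" using p[of 5] by simp
  show "(64::'a) \<noteq> 0" using p[of 6] by simp
  show "(128::'a) \<noteq> 0" using p[of 7] by simp
  show "(256::'a) \<noteq> 0" using p[of 8] by simp
  show "(512::'a) \<noteq> 0" using p[of 9] by simp
  show "(1024::'a) \<noteq> 0" using p[of 10] by simp
  show "(2048::'a) \<noteq> 0" using p[of 11] by simp
  show "(4096::'a) \<noteq> 0" using p[of 12] by simp
  show "(8192::'a) \<noteq> 0" using p[of 13] by simp
  show "(16384::'a) \<noteq> 0" using p[of 14] by simp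
  show "(32768::'a) \<noteq> 0" using p[of 15] by simp
  show "(65536::'a) \<noteq> 0" using p[of 16] by simp
  show "(131072::'a) \<noteq> 0" using p[of 17] by simp
  show "(262144::'a) \<noteq> 0" using p[of 18] by simp
  show "(524288::'a) \<noteq> 0" using p[of 19] by simp
  show "(1048576::'a) \<noteq> 0" using p[of 20] by simp
  show "(2097152::'a) \<noteq> 0" using p[of 21] by simp
  show "(4194304::'a) \<noteq> 0" using p[of 22] by simp
  show "(8388608::'a) \<noteq> 0" using p[of 23] by simp
  show "(16777216::'a) \<noteq> 0" using p[of 24] by simp
  show "(33554432::'a) \<noteq> 0" using p[of 25] by simp
  show "(67108864::'a) \<noteq> 0" using p[of 26] by simp
  show "(134217728::'a) \<noteq> 0" using p[of 27] by simp
  show "(268435456::'a) \<noteq> 0" using p[of 28] by simp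
  show "(536870912::'a) \<noteq> 0" using p[of 29] by simp
  show "(1073741824::'a) \<noteq> 0" using p[of 30] by simp
qed

lemma weq_FF:
  fixes E :: "'a::field wcurve"
  assumes "(2::'a) \<noteq> 0"
  shows "weq id E x y = (y + (wa1 E * x + wa3 E) / 2)^2 - FF E x"
  using assms nz[OF assms] unfolding weq_def FF_def B2_def B4_def B6_def
  by (simp add: field_simps power2_eq_square power3_eq_cube)

lemma poly_delta:
  fixes E :: "'a::field wcurve"
  assumes "(2::'a) \<noteq> 0"
  shows "poly (delta2 E (Pt p q)) x = dFF E x ^ 2 - 4 * FF E x * (B2 E + 2 * x + p)"
  using assms nz[OF assms] unfolding delta2_def theta2_def psi2sq_def psi3_def wb2_def wb4_def wb6_def wb8_def
     FF_def dFF_def B2_def B4_def B6_def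
  by (simp add: field_simps power2_eq_square power3_eq_cube)

lemma disc_shift:
  fixes E :: "'a::field wcurve"
  assumes "(2::'a) \<noteq> 0" "FF E e = 0"
  shows "disc E = 16 * (dFF E e)^2 * ((3*e + B2 E)^2 - 4 * dFF E e)"
proof -
  have h: "wa6 E = - (e^3 + B2 E * e^2 + B4 E * e) - wa3 E ^ 2 / 4" using assms(2) unfolding FF_def B6_def
    by (simp add: field_simps eq_neg_iff_add_eq_0 algebra_simps)
  show ?thesis using assms(1) nz[OF assms(1)] unfolding disc_def wb2_def wb4_def wb6_def wb8_def h dFF_def B2_def B4_def
    by (simp add: field_simps power2_eq_square power3_eq_cube)
qed

lemma FF_taylor:
  fixes E :: "'a::field wcurve"
  shows "FF E (x + h) = FF E x + dFF E x * h + (3*x + B2 E) * h^2 + h^3"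
  unfolding FF_def dFF_def by (simp add: algebra_simps power2_eq_square power3_eq_cube)

lemma two_torsion_Pt:
  "two_torsion E (Pt p q) \<longleftrightarrow> q + q + wa1 E * p + wa3 E = 0"
  unfolding two_torsion_def by (simp add: Let_def)

lemma linear_case:
  fixes E :: "'a::field wcurve"
  assumes two: "(2::'a) \<noteq> 0" and ell: "elliptic E"
    and eta: "\<eta> \<noteq> 0" "\<eta>^2 = FF E p" and qdef: "q = \<eta> - (wa1 E * p + wa3 E) / 2"
    and root: "poly (delta2 E (Pt p q)) x0 = 0"
  shows "\<exists>Q. on_curve E Q \<and> add E Q Q = Pt p q"
proof -
  note nzs = nz[OF two]
  define N where "N = dFF E x0 * (p - x0) + 2 * FF E x0"
  define y' where "y' = - N / (2 * \<eta>)"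
  define y0 where "y0 = y' - (wa1 E * x0 + wa3 E) / 2"
  have h1: "dFF E x0 ^ 2 = 4 * FF E x0 * (B2 E + 2 * x0 + p)"
    using root poly_delta[OF two, of E p q x0] by simp
  have h2: "FF E p = FF E x0 + dFF E x0 * (p - x0) + (3*x0 + B2 E) * (p - x0)^2 + (p - x0)^3"
    using FF_taylor[of E x0 "p - x0"] by simp
  have h3: "N^2 = 4 * FF E x0 * \<eta>^2"
  proof -
    have "N^2 = dFF E x0 ^ 2 * (p - x0)^2 + 4 * FF E x0 * dFF E x0 * (p - x0) + 4 * FF E x0 ^ 2"
      unfolding N_def by (simp add: algebra_simps power2_eq_square)
    also have "\<dots> = 4 * FF E x0 * ((B2 E + 2 * x0 + p) * (p - x0)^2 + dFF E x0 * (p - x0) + FF E x0)"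
      unfolding h1 by (simp add: algebra_simps power2_eq_square)
    also have "(B2 E + 2 * x0 + p) * (p - x0)^2 + dFF E x0 * (p - x0) + FF E x0 = FF E p"
      unfolding h2 by (simp add: algebra_simps power2_eq_square power3_eq_cube)
    finally show ?thesis using eta(2) by simp
  qed
  have h4: "y'^2 = FF E x0"
  proof -
    have "y'^2 = N^2 / (4 * \<eta>^2)" unfolding y'_def by (simp add: power_divide power_mult_distrib)
    also have "\<dots> = FF E x0" unfolding h3 using eta(1) nzs(1) by simp
    finally show ?thesis .
  qed
  have h5: "FF E x0 \<noteq> 0"
  proof
    assume F0: "FF E x0 = 0"
    then have "dFF E x0 = 0" using h1 by simp
    then have "disc E = 0" using disc_shift[OF two F0] by simp
    then show False using ell unfolding elliptic_def by simp
  qed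
  have h6: "y' \<noteq> 0" using h4 h5 by auto
  have N2: "N = - 2 * \<eta> * y'" unfolding y'_def using eta(1) two by (simp add: field_simps)
  have oc: "on_curve E (Pt x0 y0)"
    using weq_FF[OF two, of E x0 y0] h4 by (simp add: y0_def)
  have den: "2 * y0 + wa1 E * x0 + wa3 E = 2 * y'"
    unfolding y0_def using two by (simp add: field_simps)
  have nz1: "y0 + y0 + wa1 E * x0 + wa3 E \<noteq> 0"
  proof -
    have "y0 + y0 + wa1 E * x0 + wa3 E = 2 * y'" using den by (metis mult_2)
    then show ?thesis using h6 two by simp
  qed
  define l where "l = (3 * x0 ^ 2 + 2 * wa2 E * x0 + wa4 E - wa1 E * y0) / (2 * y0 + wa1 E * x0 + wa3 E)"
  define n where "n = (- (x0 ^ 3) + wa4 E * x0 + 2 * wa6 E - wa3 E * y0) / (2 * y0 + wa1 E * x0 + wa3 E)"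
  have l_eq: "l = dFF E x0 / (2 * y') - wa1 E / 2"
    unfolding l_def den unfolding y0_def dFF_def B2_def B4_def using two h6 nzs
    by (simp add: field_simps power2_eq_square)
  have n_eq: "n = y0 - l * x0"
  proof -
    define d where "d = 2 * y0 + wa1 E * x0 + wa3 E"
    have dnz: "d \<noteq> 0" unfolding d_def den using h6 two by simp
    have w: "weq id E x0 y0 = 0" using oc by simp
    have a6: "wa6 E = y0^2 + wa1 E * x0 * y0 + wa3 E * y0 - x0^3 - wa2 E * x0^2 - wa4 E * x0"
      using w unfolding weq_def by (simp add: algebra_simps)
    have nd: "n * d = - (x0 ^ 3) + wa4 E * x0 + 2 * wa6 E - wa3 E * y0"
      unfolding n_def d_def[symmetric] using dnz by simp
    have ld: "l * d = 3 * x0 ^ 2 + 2 * wa2 E * x0 + wa4 E - wa1 E * y0"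
      unfolding l_def d_def[symmetric] using dnz by simp
    have "(y0 - l * x0) * d = y0 * d - x0 * (l * d)" by (simp add: algebra_simps)
    also have "\<dots> = n * d" unfolding ld nd unfolding d_def a6
      by (simp add: algebra_simps power2_eq_square power3_eq_cube)
    finally show ?thesis using dnz by simp
  qed
  define x3 where "x3 = l ^ 2 + wa1 E * l - wa2 E - x0 - x0"
  have x3_eq: "x3 = p"
  proof -
    have "x3 = (dFF E x0)^2 / (4 * y'^2) - B2 E - 2 * x0"
      unfolding x3_def l_eq B2_def using two h6 nzs
      by (simp add: field_simps power2_eq_square)
    also have "\<dots> = p" unfolding h1 h4 using h5 nzs by (simp add: field_simps)
    finally show ?thesis .
  qed
  have y3_eq: "- (l + wa1 E) * x3 - n - wa3 E = q"
  proof -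
    have "- (l + wa1 E) * x3 - n - wa3 E = - (dFF E x0 / (2 * y')) * (p - x0) - y' - (wa1 E * p + wa3 E) / 2"
      unfolding x3_eq n_eq l_eq y0_def using two h6 nzs(1-4) by (simp add: field_simps)
    also have "- (dFF E x0 / (2 * y')) * (p - x0) - y' = - N / (2 * y')"
      unfolding N_def using h6 two h4 by (simp add: field_simps power2_eq_square)
    also have "- N / (2 * y') = \<eta>" unfolding N2 using h6 two by simp
    finally show ?thesis using qdef by simp
  qed
  have "add E (Pt x0 y0) (Pt x0 y0) = Pt p q"
    using nz1 x3_eq y3_eq unfolding x3_def l_def n_def by (simp add: Let_def)
  then show ?thesis using oc by blast
qed

lemma deg2_expand:
  fixes a :: "'a::field poly"
  assumes "degree a = 2"
  shows "a = [:coeff a 0, coeff a 1, coeff a 2:]"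
proof (rule poly_eqI)
  fix n show "coeff a n = coeff [:coeff a 0, coeff a 1, coeff a 2:] n"
    using assms coeff_eq_0[of a n]
    by (cases n; cases "n - 1"; cases "n - 2"; auto simp: coeff_pCons numeral_2_eq_2)
qed

lemma power6_eq: "(x::'a::comm_monoid_mult)^6 = x*x*x*x*x*x"
  by (simp add: numeral_eq_Suc algebra_simps)

lemma quartic_factor:
  fixes a b :: "'a::field poly"
  assumes eq: "[:k0, m1, m2, 0, 1:] = a * b" and da: "degree a = 2" and db: "degree b = 2"
    and m1: "m1 \<noteq> 0"
  shows "\<exists>\<sigma>. \<sigma> \<noteq> 0 \<and> \<sigma>^6 + 2*m2*\<sigma>^4 + (m2^2 - 4*k0)*\<sigma>^2 - m1^2 = 0"
proof -
  define a0 a1 a2 b0 b1 b2 where "a0 = coeff a 0" "a1 = coeff a 1" "a2 = coeff a 2"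
    "b0 = coeff b 0" "b1 = coeff b 1" "b2 = coeff b 2"
  have "[:k0, m1, m2, 0, 1:] = [:a0,a1,a2:] * [:b0,b1,b2:]"
    using eq deg2_expand[OF da] deg2_expand[OF db] unfolding a0_a1_a2_b0_b1_b2_def by metis
  then have E: "k0 = a0*b0" "m1 = a0*b1 + a1*b0" "m2 = a0*b2 + a1*b1 + a2*b0"
     "0 = a1*b2 + a2*b1" "1 = a2 * b2"
    by (simp_all add: algebra_simps)
  have a2: "a2 \<noteq> 0" using E(5) by auto
  define \<sigma> \<tau> \<tau>' where "\<sigma> = a1 * b2" "\<tau> = a0 * b2" "\<tau>' = b0 * a2"
  have b1: "b1 = - a1 * b2 * b2"
  proof -
    have x: "a2*b1 = -(a1*b2)" using E(4) by (simp add: eq_neg_iff_add_eq_0 add.commute)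
    have "b1 = b1 * (a2*b2)" using E(5) by simp
    also have "\<dots> = (a2*b1)*b2" by (simp add: ac_simps)
    finally show ?thesis unfolding x by simp
  qed
  have m2: "m2 = \<tau> + \<tau>' - \<sigma>^2" unfolding E(3) b1 \<sigma>_\<tau>_\<tau>'_def using E(5)
    by (simp add: algebra_simps power2_eq_square)
  have m1': "m1 = \<sigma> * (\<tau>' - \<tau>)" unfolding E(2) b1 \<sigma>_\<tau>_\<tau>'_def using E(5)
    by (simp add: algebra_simps power2_eq_square)
  have k0: "k0 = \<tau> * \<tau>'" unfolding E(1) \<sigma>_\<tau>_\<tau>'_def using E(5)
    by (simp add: algebra_simps)
  have "\<sigma> \<noteq> 0" using m1 m1' by auto
  moreover have "\<sigma>^6 + 2*m2*\<sigma>^4 + (m2^2 - 4*k0)*\<sigma>^2 - m1^2 = 0"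
    unfolding m2 m1' k0 by (simp add: algebra_simps power2_eq_square power3_eq_cube power4_eq_xxxx power6_eq)
  ultimately show ?thesis by blast
qed

lemma delta_shift:
  fixes E :: "'a::field wcurve"
  assumes two: "(2::'a) \<noteq> 0"
  shows "pcompose (delta2 E (Pt p q)) [:p, 1:] =
    [:dFF E p ^ 2 - 4 * (3*p + B2 E) * FF E p, - 8 * FF E p, - 2 * dFF E p, 0, 1:]"
  using two nz[OF two] unfolding delta2_def theta2_def psi2sq_def psi3_def wb2_def wb4_def wb6_def wb8_def
     FF_def dFF_def B2_def B4_def B6_def
  by (simp add: pcompose_pCons field_simps power2_eq_square power3_eq_cube)

lemma deg1_root:
  fixes a :: "'a::field poly"
  assumes "degree a = 1"
  shows "\<exists>x. poly a x = 0"
proof -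
  have e: "a = [:coeff a 0, coeff a 1:]"
  proof (rule poly_eqI)
    fix n show "coeff a n = coeff [:coeff a 0, coeff a 1:] n"
      using assms coeff_eq_0[of a n]
      by (cases n; cases "n - 1"; auto simp: coeff_pCons)
  qed
  have c: "coeff a 1 \<noteq> 0" using assms by (metis leading_coeff_0_iff one_neq_zero degree_0)
  have "poly a (- coeff a 0 / coeff a 1) = 0" by (subst e) (use c in simp)
  then show ?thesis by blast
qed

lemma reducible_cases:
  fixes d :: "'a::field poly"
  assumes "\<not> irreducible d" "degree d = 4"
  shows "(\<exists>x. poly d x = 0) \<or> (\<exists>a b. degree a = 2 \<and> degree b = 2 \<and> d = a * b)"
proof -
  have d0: "d \<noteq> 0" using assms(2) by auto
  have du: "\<not> d dvd 1" using assms(2) by (simp add: is_unit_iff_degree[OF d0])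
  obtain a b where ab: "d = a * b" "\<not> a dvd 1" "\<not> b dvd 1"
    using assms(1) d0 du unfolding irreducible_def by blast
  have a0: "a \<noteq> 0" "b \<noteq> 0" using ab d0 by auto
  have da: "degree a \<noteq> 0" "degree b \<noteq> 0" using ab(2,3) a0 is_unit_iff_degree by auto
  have s: "degree a + degree b = 4" using ab(1) a0 assms(2) degree_mult_eq by metis
  have "degree a = 1 \<or> degree b = 1 \<or> (degree a = 2 \<and> degree b = 2)" using s da by arith
  then consider "degree a = 1" | "degree b = 1" | "degree a = 2 \<and> degree b = 2" by blast
  then show ?thesis
  proof cases
    case 1 then obtain x where "poly a x = 0" using deg1_root by blast
    then show ?thesis using ab(1) by auto
  next
    case 2 then obtain x where "poly b x = 0" using deg1_root by blast
    then show ?thesis using ab(1) by auto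
  next
    case 3 then show ?thesis using ab(1) by blast
  qed
qed

lemma quad_case:
  fixes E :: "'a::field wcurve"
  assumes two: "(2::'a) \<noteq> 0" and eta: "\<eta> \<noteq> 0" "\<eta>^2 = FF E p"
    and fac: "delta2 E (Pt p q) = a * b" "degree a = 2" "degree b = 2"
  shows "\<exists>e w. FF E e = 0 \<and> w \<noteq> 0 \<and> p = e + w^2"
proof -
  note nzs = nz[OF two]
  define c1 c2 where "c1 = dFF E p" "c2 = 3*p + B2 E"
  have "[:c1 ^ 2 - 4 * c2 * \<eta>^2, - 8 * \<eta>^2, - 2 * c1, 0, 1:]
        = pcompose a [:p, 1:] * pcompose b [:p, 1:]"
    using delta_shift[OF two, of E p q] fac(1) eta(2) unfolding c1_c2_def by (simp add: pcompose_mult)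
  moreover have "degree (pcompose a [:p, 1:]) = 2" "degree (pcompose b [:p, 1:]) = 2"
    using fac by (simp_all add: degree_pcompose)
  moreover have "- 8 * \<eta>^2 \<noteq> 0" using eta(1) nzs(2) by simp
  ultimately obtain \<sigma> where s: "\<sigma> \<noteq> 0"
    "\<sigma>^6 + 2*(- 2 * c1)*\<sigma>^4 + ((- 2 * c1)^2 - 4*(c1 ^ 2 - 4 * c2 * \<eta>^2))*\<sigma>^2 - (- 8 * \<eta>^2)^2 = 0"
    using quartic_factor by blast
  define w where "w = - 2 * \<eta> / \<sigma>"
  define e where "e = p - w^2"
  have w0: "w \<noteq> 0" unfolding w_def using s(1) eta(1) two by simp
  have w2: "w^2 * \<sigma>^2 = 4 * \<eta>^2" unfolding w_def using s(1)
    by (simp add: power_divide power_mult_distrib)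
  have T: "FF E e = \<eta>^2 - c1 * w^2 + c2 * (w^2)^2 - (w^2)^3"
    using FF_taylor[of E p "-(w^2)"] eta(2) unfolding e_def c1_c2_def
    by (simp add: power2_eq_square power3_eq_cube)
  have "FF E e * \<sigma>^6 = \<eta>^2 * \<sigma>^6 - c1 * (w^2 * \<sigma>^2) * \<sigma>^4 + c2 * (w^2*\<sigma>^2)^2 * \<sigma>^2 - (w^2 * \<sigma>^2)^3"
    unfolding T by (simp add: algebra_simps power2_eq_square power3_eq_cube power4_eq_xxxx power6_eq)
  also have "\<dots> = \<eta>^2 * (\<sigma>^6 + 2*(- 2 * c1)*\<sigma>^4 + ((- 2 * c1)^2 - 4*(c1 ^ 2 - 4 * c2 * \<eta>^2))*\<sigma>^2 - (- 8 * \<eta>^2)^2)"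
    unfolding w2 by (simp add: algebra_simps power2_eq_square power3_eq_cube power4_eq_xxxx power6_eq)
  also have "\<dots> = 0" using s(2) by simp
  finally have "FF E e = 0" using s(1) by simp
  moreover have "p = e + w^2" unfolding e_def by simp
  ultimately show ?thesis using w0 by blast
qed

lemma weq_poly_expand:
  fixes C :: "'a \<Rightarrow> 'b::field"
  shows "weq (\<lambda>x. [:C x:]) E [:X:] [:H, G:] =
    [: H^2 + C (wa1 E) * X * H + C (wa3 E) * H - (X^3 + C (wa2 E) * X^2 + C (wa4 E) * X + C (wa6 E)),
       G * (2 * H + C (wa1 E) * X + C (wa3 E)), G^2 :]"
  unfolding weq_def by (simp add: power2_eq_square power3_eq_cube algebra_simps)

lemma field_iso_id:
  fixes a1 a2 a3 a4 a6 e A B D Z X G H :: "'b::field"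
  assumes two: "(2::'b) \<noteq> 0" and Z: "Z \<noteq> 0"
    and Fe: "e^3 + (a1^2/4 + a2) * e^2 + (a1*a3/2 + a4) * e + (a3^2/4 + a6) = 0"
    and A: "A = 3*e + (a1^2/4 + a2)"
    and B: "B = 3*e^2 + 2*(a1^2/4 + a2)*e + (a1*a3/2 + a4)"
    and D: "D = A^2 - 4*B"
    and X: "X = (Z^2 + (4*e - 2*A) * Z + D) / (4*Z)"
    and G: "G = (D - Z^2) / (8 * Z^2)"
    and H: "H = - (a1 * X + a3) / 2"
  shows "H^2 + a1 * X * H + a3 * H - (X^3 + a2 * X^2 + a4 * X + a6) = G^2 * (- (Z^3 + (-2*A) * Z^2 + D * Z + 0))"
    and "G * (2 * H + a1 * X + a3) = G^2 * (0 * Z + 0)"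
proof -
  note nzs = nz[OF two]
  define U where "U = Z^2 - 2*A*Z + D"
  define Y where "Y = U / (4 * Z)"
  have XY: "X = e + Y" unfolding X Y_def U_def using Z nzs(1) by (simp add: field_simps)
  have a6: "a6 = - (e^3 + (a1^2/4 + a2) * e^2 + (a1*a3/2 + a4) * e + a3^2/4)"
    using Fe by (simp add: algebra_simps eq_neg_iff_add_eq_0)
  have L: "H^2 + a1 * X * H + a3 * H - (X^3 + a2 * X^2 + a4 * X + a6) = - (Y^3 + A * Y^2 + B * Y)"
    unfolding H XY A B a6 using two nzs(1-10)
    by (simp add: field_simps power2_eq_square power3_eq_cube)
  have "Y^3 + A * Y^2 + B * Y = U * (U^2 + 4*A*Z*U + 16*B*Z^2) / (64 * Z^3)"
    unfolding Y_def using Z nzs by (simp add: field_simps power2_eq_square power3_eq_cube)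
  also have "U^2 + 4*A*Z*U + 16*B*Z^2 = (D - Z^2)^2"
    unfolding U_def D by (simp add: algebra_simps power2_eq_square)
  also have "U * (D - Z^2)^2 / (64 * Z^3) = G^2 * (Z^3 + (-2*A) * Z^2 + D * Z + 0)"
    unfolding G U_def using Z nzs by (simp add: field_simps power2_eq_square power3_eq_cube)
  finally show "H^2 + a1 * X * H + a3 * H - (X^3 + a2 * X^2 + a4 * X + a6) = G^2 * (- (Z^3 + (-2*A) * Z^2 + D * Z + 0))"
    unfolding L by (simp add: algebra_simps)
  show "G * (2 * H + a1 * X + a3) = G^2 * (0 * Z + 0)"
  proof -
    have "2 * H + a1 * X + a3 = 0" unfolding H using two by (simp add: field_simps)
    then show ?thesis by simp
  qed
qed

definition Cf :: "'a::field \<Rightarrow> 'a poly fract" where "Cf c = to_fract [:c:]"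
definition Zf :: "'a::field poly fract" where "Zf = to_fract [:0, 1:]"

lemma Cf_0 [simp]: "Cf 0 = 0" and Cf_1 [simp]: "Cf 1 = 1"
  by (simp_all add: Cf_def one_pCons[symmetric])
lemma Cf_add [simp]: "Cf (x + y) = Cf x + Cf y"
proof -
  have "[:x + y:] = [:x:] + [:y:]" by simp
  then show ?thesis unfolding Cf_def by (metis to_fract_add)
qed
lemma Cf_minus [simp]: "Cf (- x) = - Cf x"
proof -
  have "[:- x:] = - [:x:]" by simp
  then show ?thesis unfolding Cf_def by (metis to_fract_uminus)
qed
lemma Cf_diff [simp]: "Cf (x - y) = Cf x - Cf y"
  using Cf_add[of x "- y"] by simp
lemma Cf_mult [simp]: "Cf (x * y) = Cf x * Cf y"
proof -
  have "[:x * y:] = [:x:] * [:y:]" by simp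
  then show ?thesis unfolding Cf_def by (metis to_fract_mult)
qed
lemma Cf_eq_0_iff [simp]: "Cf x = 0 \<longleftrightarrow> x = 0" by (simp add: Cf_def)
lemma Cf_power [simp]: "Cf (x ^ n) = Cf x ^ n" by (induction n) simp_all
lemma Cf_of_nat [simp]: "Cf (of_nat n) = of_nat n" by (induction n) simp_all
lemma Cf_numeral [simp]: "Cf (numeral n) = numeral n"
  using Cf_of_nat[of "numeral n"] by simp
lemma Cf_div [simp]: "Cf (x / y) = Cf x / Cf y"
proof (cases "y = 0")
  case True then show ?thesis by simp
next
  case False
  have "Cf (x / y) * Cf y = Cf x" using False by (simp flip: Cf_mult)
  then show ?thesis using False by (simp add: field_simps)
qed
lemma to_fract_pCons: "to_fract (pCons c p) = Cf c + Zf * to_fract p"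
proof -
  have "pCons c p = [:c:] + [:0, 1:] * p" by simp
  then show ?thesis unfolding Cf_def Zf_def by (metis to_fract_add to_fract_mult)
qed
lemma Zf_nz: "Zf \<noteq> 0" by (simp add: Zf_def)
lemma cK_Cf: "cK = (\<lambda>x. [:Cf x:])" by (simp add: cK_def Cf_def to_fract_def fun_eq_iff)

lemma bezout_coprime:
  fixes a b :: "'a::field poly"
  assumes "x * a + y * b = 1"
  shows "coprime a b"
proof (rule coprimeI)
  fix c assume "c dvd a" "c dvd b"
  then have "c dvd x * a + y * b" by simp
  then show "c dvd 1" using assms by simp
qed

lemma h_reduce:
  fixes u v x y :: "'a::field poly"
  assumes bz: "x * u + y * v = 1" and v: "v \<noteq> 0"
  shows "\<exists>h1 h2. h2 \<noteq> 0 \<and> coprime h1 h2 \<and> Fract h1 h2 = Fract (smult c1 u + smult c2 v) v \<and>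
     (\<forall>t. poly v t \<noteq> 0 \<longrightarrow> poly h2 t \<noteq> 0 \<and> poly h1 t / poly h2 t = c1 * (poly u t / poly v t) + c2)"
proof (cases "c1 = 0")
  case True
  have "Fract [:c2:] 1 = Fract (smult c1 u + smult c2 v) v"
    using v True by (simp add: eq_fract)
  moreover have "\<forall>t. poly v t \<noteq> 0 \<longrightarrow> poly 1 t \<noteq> 0 \<and> poly [:c2:] t / poly 1 t = c1 * (poly u t / poly v t) + c2"
    using True by simp
  ultimately show ?thesis by (intro exI[of _ "[:c2:]"] exI[of _ 1]) simp
next
  case False
  have "smult (1/c1) x * (smult c1 u + smult c2 v) + (y - smult (c2/c1) x) * v = x * u + y * v"
    using False by (simp add: algebra_simps)
  then have eq: "smult (1/c1) x * (smult c1 u + smult c2 v) + (y - smult (c2/c1) x) * v = 1"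
    using bz by simp
  have "coprime (smult c1 u + smult c2 v) v" by (rule bezout_coprime[OF eq])
  moreover have "\<forall>t. poly v t \<noteq> 0 \<longrightarrow> poly v t \<noteq> 0 \<and> poly (smult c1 u + smult c2 v) t / poly v t = c1 * (poly u t / poly v t) + c2"
    by (simp add: field_simps)
  ultimately show ?thesis using v by blast
qed

lemma to_fract_smult: "to_fract (smult c p) = Cf c * to_fract p"
proof -
  have "smult c p = [:c:] * p" by simp
  then show ?thesis unfolding Cf_def by (metis to_fract_mult)
qed

lemma isog_case:
  fixes E :: "'a::field wcurve"
  assumes two: "(2::'a) \<noteq> 0" and ell: "elliptic E" and Fe: "FF E e = 0"
    and w0: "w \<noteq> 0" and eta: "\<eta> \<noteq> 0" "\<eta>^2 = FF E p" and pe: "p = e + w^2"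
    and qdef: "q = \<eta> - (wa1 E * p + wa3 E) / 2"
  shows "\<exists>(E' :: 'a wcurve) (\<psi> :: 'a isog) Q. elliptic E' \<and> is_isogeny E' E \<psi> \<and> isog_degree \<psi> = 2
               \<and> on_curve E' Q \<and> isog_apply \<psi> Q = Pt p q"
proof -
  note nzs = nz[OF two]
  define A where "A = 3*e + B2 E"
  define B where "B = dFF E e"
  define D where "D = A^2 - 4*B"
  have dE: "disc E = 16 * B^2 * D" using disc_shift[OF two Fe] unfolding A_def B_def D_def by simp
  have B0: "B \<noteq> 0" and D0: "D \<noteq> 0" using ell dE nzs(3) unfolding elliptic_def by auto
  define E' :: "'a wcurve" where "E' = \<lparr>wa1 = 0, wa2 = -2*A, wa3 = 0, wa4 = D, wa6 = 0\<rparr>"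
  have ellE': "elliptic E'"
  proof -
    have "disc E' = 64 * D^2 * (A^2 - D)" unfolding E'_def disc_def wb2_def wb4_def wb6_def wb8_def
      by (simp add: algebra_simps power2_eq_square power3_eq_cube)
    also have "A^2 - D = 4*B" unfolding D_def by simp
    finally have "disc E' = 256 * B * D^2" by simp
    then show ?thesis unfolding elliptic_def using B0 D0 nzs(7) by simp
  qed
  define U0 :: "'a poly" where "U0 = [:D, 4*e - 2*A, 1:]"
  define V0 :: "'a poly" where "V0 = [:0, 4:]"
  define Gn :: "'a poly" where "Gn = [:D, 0, -1:]"
  define Gd :: "'a poly" where "Gd = [:0, 0, 8:]"
  have bz: "[:1/D:] * U0 + [:-(4*e - 2*A)/(4*D), -1/(4*D):] * V0 = 1"
    unfolding U0_def V0_def using D0 nzs(1) by (simp add: field_simps one_pCons)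
  have V00: "V0 \<noteq> 0" unfolding V0_def using nzs(1) by simp
  have Gd0: "Gd \<noteq> 0" unfolding Gd_def using nzs(2) by simp
  have copu: "coprime U0 V0" by (rule bezout_coprime[OF bz])
  have bzg: "[:1/D:] * Gn + [:1/(8*D):] * Gd = 1"
    unfolding Gn_def Gd_def using D0 nzs(2) by (simp add: field_simps one_pCons)
  have copg: "coprime Gn Gd" by (rule bezout_coprime[OF bzg])
  obtain h1 h2 where h: "h2 \<noteq> 0" "coprime h1 h2"
     "Fract h1 h2 = Fract (smult (-(wa1 E)/2) U0 + smult (-(wa3 E)/2) V0) V0"
     "\<forall>t. poly V0 t \<noteq> 0 \<longrightarrow> poly h2 t \<noteq> 0 \<and>
         poly h1 t / poly h2 t = (-(wa1 E)/2) * (poly U0 t / poly V0 t) + (-(wa3 E)/2)"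
    using h_reduce[OF bz V00] by blast
  define \<psi> :: "'a isog" where "\<psi> = (U0, V0, Gn, Gd, h1, h2)"
  have comps: "iu \<psi> = U0" "iv \<psi> = V0" "ig1 \<psi> = Gn" "ig2 \<psi> = Gd" "ih1 \<psi> = h1" "ih2 \<psi> = h2"
    unfolding \<psi>_def iu_def iv_def ig1_def ig2_def ih1_def ih2_def by simp_all
  have degU: "degree U0 = 2" unfolding U0_def by simp
  have degV: "degree V0 = 1" unfolding V0_def using nzs(1) by simp
  have deg: "isog_degree \<psi> = 2" unfolding isog_degree_def comps degU degV by simp
  define c1 c2 where "c1 = -(wa1 E)/2" "c2 = -(wa3 E)/2"
  define X where "X = Fract U0 V0"
  define G where "G = Fract Gn Gd"
  define H where "H = Fract h1 h2"
  have tU: "to_fract U0 = Zf^2 + (4 * Cf e - 2 * Cf A) * Zf + Cf D"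
    unfolding U0_def by (simp add: to_fract_pCons algebra_simps power2_eq_square)
  have tV: "to_fract V0 = 4 * Zf"
    unfolding V0_def by (simp add: to_fract_pCons)
  have Xe: "X = (Zf^2 + (4 * Cf e - 2 * Cf A) * Zf + Cf D) / (4 * Zf)"
    unfolding X_def Fract_conv_to_fract tU tV ..
  have Ge: "G = (Cf D - Zf^2) / (8 * Zf^2)"
    unfolding G_def Fract_conv_to_fract Gn_def Gd_def
    by (simp add: to_fract_pCons algebra_simps power2_eq_square)
  have two': "(2:: 'a poly fract) \<noteq> 0" using Cf_eq_0_iff[of "2::'a"] two by simp
  have He: "H = - (Cf (wa1 E) * X + Cf (wa3 E)) / 2"
  proof -
    have "H = to_fract (smult c1 U0 + smult c2 V0) / to_fract V0"
      unfolding H_def h(3) c1_c2_def by (simp only: Fract_conv_to_fract)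
    also have "\<dots> = Cf c1 * X + Cf c2"
      unfolding X_def Fract_conv_to_fract using V00
      by (simp add: to_fract_smult field_simps)
    finally show ?thesis unfolding c1_c2_def using two' by (simp add: field_simps)
  qed
  have Fe': "Cf e^3 + (Cf (wa1 E)^2/4 + Cf (wa2 E)) * Cf e^2 + (Cf (wa1 E)*Cf (wa3 E)/2 + Cf (wa4 E)) * Cf e
      + (Cf (wa3 E)^2/4 + Cf (wa6 E)) = 0"
  proof -
    have "Cf (FF E e) = 0" using Fe by simp
    then show ?thesis unfolding FF_def B2_def B4_def B6_def by simp
  qed
  have Ae: "Cf A = 3 * Cf e + (Cf (wa1 E)^2/4 + Cf (wa2 E))" unfolding A_def B2_def by simp
  have Be: "Cf B = 3 * Cf e^2 + 2 * (Cf (wa1 E)^2/4 + Cf (wa2 E)) * Cf e + (Cf (wa1 E)*Cf (wa3 E)/2 + Cf (wa4 E))"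
    unfolding B_def dFF_def B2_def B4_def by simp
  have De: "Cf D = Cf A^2 - 4 * Cf B" unfolding D_def by simp
  note iso = field_iso_id[OF two' Zf_nz Fe' Ae Be De Xe Ge He]
  have weqE: "weq cK E [:X:] [:H, G:] = [:G^2:] * weq cK E' [:Zf:] [:0, 1:]"
    unfolding cK_Cf weq_poly_expand[where C = Cf and E = E]
    using weq_poly_expand[where C = Cf and E = E' and X = Zf and H = 0 and G = 1] iso
    by (simp add: E'_def)
  have dv: "weq cK E' [: Fract [:0, 1:] 1 :] [:0, 1:]
       dvd weq cK E [: Fract (iu \<psi>) (iv \<psi>) :] [: Fract (ih1 \<psi>) (ih2 \<psi>), Fract (ig1 \<psi>) (ig2 \<psi>) :]"
  proof -
    have zf: "Fract [:0, 1:] 1 = (Zf :: 'a poly fract)" unfolding Zf_def to_fract_def ..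
    show ?thesis unfolding comps X_def[symmetric] G_def[symmetric] H_def[symmetric] weqE zf
      by (rule dvd_triv_right)
  qed
  have isog: "is_isogeny E' E \<psi>"
    unfolding is_isogeny_def using dv comps V00 Gd0 h(1,2) copu copg degU degV by simp
  define r where "r = 2 * \<eta> / w"
  define M where "M = A + 2 * w^2"
  define xq where "xq = M + r"
  define yq where "yq = - 2 * w * xq"
  have eta2: "\<eta>^2 = w^2 * (w^4 + A * w^2 + B)"
  proof -
    have "\<eta>^2 = FF E (e + w^2)" using eta(2) pe by simp
    also have "\<dots> = B * w^2 + A * (w^2)^2 + (w^2)^3"
      unfolding FF_taylor Fe A_def B_def by simp
    finally show ?thesis by (simp add: algebra_simps power2_eq_square power3_eq_cube power4_eq_xxxx)
  qed
  have r2: "r^2 = 4 * (w^4 + A * w^2 + B)"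
  proof -
    have "r^2 = 4 * \<eta>^2 / w^2" unfolding r_def by (simp add: power_divide power_mult_distrib)
    then show ?thesis unfolding eta2 using w0 by simp
  qed
  have DM: "D = M^2 - r^2" unfolding D_def M_def r2
    by (simp add: algebra_simps power2_eq_square power4_eq_xxxx)
  have uq: "xq^2 - (2*A + 4*w^2) * xq + D = 0"
  proof -
    have "2*A + 4*w^2 = 2 * M" unfolding M_def by simp
    then show ?thesis unfolding DM xq_def by (simp add: algebra_simps power2_eq_square)
  qed
  have xq0: "xq \<noteq> 0" using uq D0 by auto
  have Dx: "D - xq^2 = - 2 * r * xq" unfolding DM xq_def by (simp add: algebra_simps power2_eq_square)
  have oc: "on_curve E' (Pt xq yq)"
  proof -
    have "weq id E' xq yq = - xq * (xq^2 - (2*A + 4*w^2) * xq + D)"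
      unfolding weq_def E'_def yq_def by (simp add: algebra_simps power2_eq_square power3_eq_cube)
    then show ?thesis using uq by simp
  qed
  have pV: "poly V0 xq = 4 * xq" unfolding V0_def by simp
  have pV0: "poly V0 xq \<noteq> 0" unfolding pV using xq0 nzs(1) by simp
  have px: "poly U0 xq / poly V0 xq = p"
  proof -
    have "poly U0 xq = xq^2 - (2*A + 4*w^2) * xq + D + 4 * (e + w^2) * xq"
      unfolding U0_def by (simp add: algebra_simps power2_eq_square)
    also have "\<dots> = 4 * p * xq" unfolding uq pe by simp
    finally show ?thesis unfolding pV using xq0 nzs(1) by simp
  qed
  have py: "poly Gn xq / poly Gd xq * yq + poly h1 xq / poly h2 xq = q"
  proof -
    have "poly Gn xq / poly Gd xq = (D - xq^2) / (8 * xq^2)"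
      unfolding Gn_def Gd_def by (simp add: algebra_simps power2_eq_square)
    also have "\<dots> * yq = \<eta>"
      unfolding Dx yq_def r_def using xq0 w0 nzs(1-3) by (simp add: field_simps power2_eq_square)
    finally have 1: "poly Gn xq / poly Gd xq * yq = \<eta>" .
    have 2: "poly h1 xq / poly h2 xq = - (wa1 E * p + wa3 E) / 2"
    proof -
      have "poly h1 xq / poly h2 xq = (-(wa1 E)/2) * (poly U0 xq / poly V0 xq) + (-(wa3 E)/2)"
        using h(4) pV0 by blast
      moreover have "(-(wa1 E)/2) * p + (-(wa3 E)/2) = -(wa1 E * p + wa3 E)/2"
        by (simp add: add_divide_distrib)
      ultimately show ?thesis unfolding px by simp
    qed
    show ?thesis unfolding 1 2 qdef by (metis diff_conv_add_uminus minus_divide_left)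
  qed
  have "isog_apply \<psi> (Pt xq yq) = Pt p q"
    using pV0 px py unfolding comps[symmetric] by simp
  then show ?thesis using ellE' isog deg oc by blast
qed

theorem lemma4p1:
  fixes E :: "'a::field wcurve" and P :: "'a point"
  assumes char: "(2::'a) \<noteq> 0"
    and ell: "elliptic E"
    and P: "on_curve E P"
  shows "irreducible (delta2 E P)
         \<or> two_torsion E P
         \<or> (\<exists>Q. on_curve E Q \<and> add E Q Q = P)
         \<or> (\<exists>(E' :: 'a wcurve) (\<psi> :: 'a isog) Q.
               elliptic E' \<and> is_isogeny E' E \<psi> \<and> isog_degree \<psi> = 2
               \<and> on_curve E' Q \<and> isog_apply \<psi> Q = P)"
proof (cases P)
  case Infty
  then have "two_torsion E P" by (simp add: two_torsion_def)
  then show ?thesis by blast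
next
  case (Pt p q)
  show ?thesis
  proof (cases "two_torsion E P \<or> irreducible (delta2 E P)")
    case True then show ?thesis by blast
  next
    case False
    define \<eta> where "\<eta> = q + (wa1 E * p + wa3 E) / 2"
    have eta0: "\<eta> \<noteq> 0"
    proof
      assume "\<eta> = 0"
      then have "q + q + wa1 E * p + wa3 E = 0" unfolding \<eta>_def using char
        by (simp add: field_simps)
      then show False using False Pt two_torsion_Pt by blast
    qed
    have eta2: "\<eta>^2 = FF E p"
      using P Pt weq_FF[OF char, of E p q] unfolding \<eta>_def by simp
    have qdef: "q = \<eta> - (wa1 E * p + wa3 E) / 2" unfolding \<eta>_def by simp
    have "degree (pcompose (delta2 E (Pt p q)) [:p, 1:]) = 4"
      unfolding delta_shift[OF char] by simp
    then have deg: "degree (delta2 E (Pt p q)) = 4" by (simp add: degree_pcompose)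
    have nirr: "\<not> irreducible (delta2 E (Pt p q))" using False Pt by simp
    from reducible_cases[OF nirr deg] show ?thesis
    proof
      assume "\<exists>x. poly (delta2 E (Pt p q)) x = 0"
      then obtain x0 where "poly (delta2 E (Pt p q)) x0 = 0" by blast
      from linear_case[OF char ell eta0 eta2 qdef this] show ?thesis using Pt by blast
    next
      assume "\<exists>a b. degree a = 2 \<and> degree b = 2 \<and> delta2 E (Pt p q) = a * b"
      then obtain a b where ab: "delta2 E (Pt p q) = a * b" "degree a = 2" "degree b = 2" by blast
      obtain e w where ew: "FF E e = 0" "w \<noteq> 0" "p = e + w^2"
        using quad_case[OF char eta0 eta2 ab] by blast
      from isog_case[OF char ell ew(1) ew(2) eta0 eta2 ew(3) qdef] show ?thesis using Pt by blast
    qed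
  qed
qed

end
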